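(* Let $V$ be a partially expanded network (as defined in the context) satisfying Properties P1, P2 and P3, with consumption values $q_v$, $v\in V$, given by P3. Suppose the discretized TDASP has a feasible solution. Then the TDASP restricted to $V$ has a feasible solution, and its optimal value (minimum of $\theta_n(t_n)$) is less than or equal to the optimal value of the discretized TDASP.
   Context: Data: activities $1,\dots,n$ with time windows $[e_i,l_i]$, functions $\tau_i$, $\rho_i$, $\theta_i(t)=t+\tau_i(t)$, and a capacity $Q$. Every $\theta_i$ is non-decreasing (FIFO property). Let $\varepsilon>0$ be such that all $e_i,l_i$ are integer multiples of $\varepsilon$, and let $T_i=\{e_i,e_i+\varepsilon,\dots,l_i\}$. The discretized TDASP (fully expanded network) is: choose $t_i\in T_i$ ($1\le i\le n$) minimising $\theta_n(t_n)$ subject to $\theta_i(t_i)\le t_{i+1}$ for $1\le i<n$ and $\sum_{i=1}^n\rho_i(t_i)\le Q$. A partially expanded network is a set $V\subseteq\{(i,t):1\le i\le n,\ t\in T_i\}$. It satisfies Property P1 if $(i,e_i)\in V$ and $(i,l_i)\in V$ for every $i$; Property P2 if for every $(i,t)\in V$ with $i<n$ and $e_{i+1}<\varepsilon\lceil\theta_i(t)/\varepsilon\rceil<l_{i+1}$ we have $(i+1,\varepsilon\lceil\theta_i(t)/\varepsilon\rceil)\in V$; Property P3 if every $(i,t)\in V$ with $t<l_i$ is assigned the value $q_{(i,t)}=\min_{\bar t\in\{t,t+\varepsilon,\dots,t'-\varepsilon\}}\rho_i(\bar t)$ where $t'>t$ is the smallest value with $(i,t')\in V$, and every $(i,l_i)\in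 V$ is assigned $q_{(i,l_i)}=\rho_i(l_i)$. The TDASP restricted to $V$ is: choose $(1,t_1),\dots,(n,t_n)\in V$ minimising $\theta_n(t_n)$ subject to $\theta_i(t_i)\le t_{i+1}$ for $1\le i<n$ and $\sum_{i=1}^n q_{(i,t_i)}\le Q$. *)

theory Defs
  imports Complex_Main
begin

definition Tset :: "real \<Rightarrow> real \<Rightarrow> real \<Rightarrow> real set" where
  "Tset eps ei li = {t. \<exists>k::nat. t = ei + real k * eps \<and> t \<le> li}"

definition theta :: "(nat \<Rightarrow> real \<Rightarrow> real) \<Rightarrow> nat \<Rightarrow> real \<Rightarrow> real" where
  "theta tau i t = t + tau i t"

definition round_up :: "real \<Rightarrow> real \<Rightarrow> real" where
  "round_up eps x = eps * of_int (ceiling (x / eps))"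

definition nodes :: "nat \<Rightarrow> real \<Rightarrow> (nat \<Rightarrow> real) \<Rightarrow> (nat \<Rightarrow> real) \<Rightarrow> (nat \<times> real) set" where
  "nodes n eps e l = {(i, t). 1 \<le> i \<and> i \<le> n \<and> t \<in> Tset eps (e i) (l i)}"

definition P1 :: "nat \<Rightarrow> (nat \<Rightarrow> real) \<Rightarrow> (nat \<Rightarrow> real) \<Rightarrow> (nat \<times> real) set \<Rightarrow> bool" where
  "P1 n e l V \<longleftrightarrow> (\<forall>i. 1 \<le> i \<and> i \<le> n \<longrightarrow> (i, e i) \<in> V \<and> (i, l i) \<in> V)"

definition P2 :: "nat \<Rightarrow> real \<Rightarrow> (nat \<Rightarrow> real) \<Rightarrow> (nat \<Rightarrow> real) \<Rightarrow> (nat \<Rightarrow> real \<Rightarrow> real)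
    \<Rightarrow> (nat \<times> real) set \<Rightarrow> bool" where
  "P2 n eps e l tau V \<longleftrightarrow>
     (\<forall>i t. (i, t) \<in> V \<and> i < n \<and> e (i+1) < round_up eps (theta tau i t)
              \<and> round_up eps (theta tau i t) < l (i+1)
          \<longrightarrow> (i+1, round_up eps (theta tau i t)) \<in> V)"

definition next_time :: "(nat \<times> real) set \<Rightarrow> nat \<Rightarrow> real \<Rightarrow> real" where
  "next_time V i t = Min {t'. (i, t') \<in> V \<and> t < t'}"

definition P3 :: "real \<Rightarrow> (nat \<Rightarrow> real) \<Rightarrow> (nat \<Rightarrow> real) \<Rightarrow> (nat \<Rightarrow> real \<Rightarrow> real)
    \<Rightarrow> (nat \<times> real) set \<Rightarrow> (nat \<Rightarrow> real \<Rightarrow> real) \<Rightarrow> bool" where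
  "P3 eps e l rho V q \<longleftrightarrow>
     (\<forall>i t. (i, t) \<in> V \<and> t < l i \<longrightarrow>
        q i t = Min (rho i ` {s \<in> Tset eps (e i) (l i). t \<le> s \<and> s < next_time V i t}))
   \<and> (\<forall>i. (i, l i) \<in> V \<longrightarrow> q i (l i) = rho i (l i))"

definition disc_feasible :: "nat \<Rightarrow> real \<Rightarrow> (nat \<Rightarrow> real) \<Rightarrow> (nat \<Rightarrow> real) \<Rightarrow> (nat \<Rightarrow> real \<Rightarrow> real)
    \<Rightarrow> (nat \<Rightarrow> real \<Rightarrow> real) \<Rightarrow> real \<Rightarrow> (nat \<Rightarrow> real) \<Rightarrow> bool" where
  "disc_feasible n eps e l tau rho Q t \<longleftrightarrow>
     (\<forall>i. 1 \<le> i \<and> i \<le> n \<longrightarrow> t i \<in> Tset eps (e i) (l i))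
   \<and> (\<forall>i. 1 \<le> i \<and> i < n \<longrightarrow> theta tau i (t i) \<le> t (i+1))
   \<and> (\<Sum>i=1..n. rho i (t i)) \<le> Q"

definition restr_feasible :: "nat \<Rightarrow> (nat \<Rightarrow> real \<Rightarrow> real) \<Rightarrow> (nat \<times> real) set
    \<Rightarrow> (nat \<Rightarrow> real \<Rightarrow> real) \<Rightarrow> real \<Rightarrow> (nat \<Rightarrow> real) \<Rightarrow> bool" where
  "restr_feasible n tau V q Q t \<longleftrightarrow>
     (\<forall>i. 1 \<le> i \<and> i \<le> n \<longrightarrow> (i, t i) \<in> V)
   \<and> (\<forall>i. 1 \<le> i \<and> i < n \<longrightarrow> theta tau i (t i) \<le> t (i+1))
   \<and> (\<Sum>i=1..n. q i (t i)) \<le> Q"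

definition disc_opt :: "nat \<Rightarrow> real \<Rightarrow> (nat \<Rightarrow> real) \<Rightarrow> (nat \<Rightarrow> real) \<Rightarrow> (nat \<Rightarrow> real \<Rightarrow> real)
    \<Rightarrow> (nat \<Rightarrow> real \<Rightarrow> real) \<Rightarrow> real \<Rightarrow> real" where
  "disc_opt n eps e l tau rho Q =
     Min {theta tau n (t n) | t. disc_feasible n eps e l tau rho Q t}"

definition restr_opt :: "nat \<Rightarrow> (nat \<Rightarrow> real \<Rightarrow> real) \<Rightarrow> (nat \<times> real) set
    \<Rightarrow> (nat \<Rightarrow> real \<Rightarrow> real) \<Rightarrow> real \<Rightarrow> real" where
  "restr_opt n tau V q Q = Min {theta tau n (t n) | t. restr_feasible n tau V q Q t}"

end

theory Submission
  imports Defs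
begin

lemma finite_Tset:
  assumes "eps > 0" shows "finite (Tset eps a b)"
proof -
  have "Tset eps a b \<subseteq> (\<lambda>k::nat. a + real k * eps) ` {..nat \<lceil>(b - a)/eps\<rceil>}"
  proof
    fix x assume "x \<in> Tset eps a b"
    then obtain k::nat where x: "x = a + real k * eps" "x \<le> b" by (auto simp: Tset_def)
    then have "real k * eps \<le> b - a" by simp
    then have "real k \<le> (b-a)/eps" using assms by (simp add: pos_le_divide_eq)
    also have "\<dots> \<le> real_of_int \<lceil>(b-a)/eps\<rceil>" by (rule le_of_int_ceiling)
    finally have "int k \<le> \<lceil>(b-a)/eps\<rceil>" by linarith
    then have "k \<le> nat \<lceil>(b-a)/eps\<rceil>" by linarith
    then show "x \<in> (\<lambda>k::nat. a + real k * eps) ` {..nat \<lceil>(b - a)/eps\<rceil>}" using x by auto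
  qed
  then show ?thesis by (rule finite_subset) auto
qed

lemma Tset_grid:
  assumes "e = of_int k0 * eps" "u \<in> Tset eps e l"
  shows "\<exists>m::int. u = of_int m * eps"
proof -
  obtain k::nat where "u = e + real k * eps" using assms(2) by (auto simp: Tset_def)
  then have "u = of_int (k0 + int k) * eps" using assms(1) by (simp add: algebra_simps)
  then show ?thesis by blast
qed

lemma round_up_le:
  assumes "eps > 0" "x \<le> of_int m * eps"
  shows "round_up eps x \<le> of_int m * eps"
proof -
  have "x / eps \<le> of_int m" using assms by (simp add: pos_divide_le_eq)
  then have "\<lceil>x/eps\<rceil> \<le> m" by (simp add: ceiling_le_iff)
  then have "real_of_int \<lceil>x/eps\<rceil> \<le> real_of_int m" by simp
  then show ?thesis using assms(1) unfolding round_up_def by (simp add: mult_left_mono)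
qed

lemma le_round_up:
  assumes "eps > 0" shows "x \<le> round_up eps x"
proof -
  have "x / eps \<le> real_of_int \<lceil>x/eps\<rceil>" by (rule le_of_int_ceiling)
  then have "x \<le> real_of_int \<lceil>x/eps\<rceil> * eps" using pos_divide_le_eq[OF assms] by blast
  then show ?thesis unfolding round_up_def by (simp add: mult.commute)
qed

lemma Tset_bounds: "u \<in> Tset eps e l \<Longrightarrow> eps > 0 \<Longrightarrow> e \<le> u \<and> u \<le> l"
  by (auto simp: Tset_def)

lemma main:
  fixes n :: nat and eps :: real and e l :: "nat \<Rightarrow> real"
    and tau rho :: "nat \<Rightarrow> real \<Rightarrow> real" and Q :: real
    and V :: "(nat \<times> real) set" and q :: "nat \<Rightarrow> real \<Rightarrow> real"
  assumes n1: "1 \<le> n"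
    and eps: "eps > 0"
    and grid: "\<forall>i. 1 \<le> i \<and> i \<le> n \<longrightarrow> (\<exists>k::int. e i = of_int k * eps) \<and> (\<exists>k::int. l i = of_int k * eps)"
    and mono: "\<forall>i. 1 \<le> i \<and> i \<le> n \<longrightarrow> mono (theta tau i)"
    and Vsub: "V \<subseteq> nodes n eps e l"
    and p1: "P1 n e l V"
    and p2: "P2 n eps e l tau V"
    and p3: "P3 eps e l rho V q"
    and tf: "disc_feasible n eps e l tau rho Q t"
  shows "\<exists>s. restr_feasible n tau V q Q s \<and> theta tau n (s n) \<le> theta tau n (t n)"
proof -
  have Vi: "(i,u) \<in> V \<Longrightarrow> u \<in> Tset eps (e i) (l i) \<and> 1 \<le> i \<and> i \<le> n" for i u
    using Vsub by (auto simp: nodes_def)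
  have finVi: "finite {u. (i,u) \<in> V \<and> P u}" for i P
    by (rule finite_subset[OF _ finite_Tset[OF eps, of "e i" "l i"]]) (auto dest: Vi)
  have tT: "1 \<le> i \<Longrightarrow> i \<le> n \<Longrightarrow> t i \<in> Tset eps (e i) (l i)" for i
    using tf by (auto simp: disc_feasible_def)
  have tprec: "1 \<le> i \<Longrightarrow> i < n \<Longrightarrow> theta tau i (t i) \<le> t (i+1)" for i
    using tf by (auto simp: disc_feasible_def)
  have tsum: "(\<Sum>i=1..n. rho i (t i)) \<le> Q" using tf by (auto simp: disc_feasible_def)
  have eV: "1 \<le> i \<Longrightarrow> i \<le> n \<Longrightarrow> (i, e i) \<in> V" and lV: "1 \<le> i \<Longrightarrow> i \<le> n \<Longrightarrow> (i, l i) \<in> V" for i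
    using p1 by (auto simp: P1_def)
  define s where "s i = Max {u. (i,u) \<in> V \<and> u \<le> t i}" for i
  have sprops: "(i, s i) \<in> V \<and> s i \<le> t i \<and> (\<forall>u. (i,u) \<in> V \<and> u \<le> t i \<longrightarrow> u \<le> s i)"
    if i: "1 \<le> i" "i \<le> n" for i
  proof -
    have fin: "finite {u. (i,u) \<in> V \<and> u \<le> t i}" by (rule finVi)
    have "e i \<le> t i" using Tset_bounds[OF tT[OF i] eps] by simp
    then have ne: "e i \<in> {u. (i,u) \<in> V \<and> u \<le> t i}"
      using eV[OF i] by simp
    have "s i \<in> {u. (i,u) \<in> V \<and> u \<le> t i}" unfolding s_def
      using Max_in[OF fin] ne by blast
    moreover have "\<forall>u. (i,u) \<in> V \<and> u \<le> t i \<longrightarrow> u \<le> s i"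
      unfolding s_def using Max_ge[OF fin] by simp
    ultimately show ?thesis by blast
  qed
  have sprec: "theta tau i (s i) \<le> s (i+1)" if i: "1 \<le> i" "i < n" for i
  proof -
    define x where "x = theta tau i (s i)"
    define r where "r = round_up eps x"
    have i1: "1 \<le> i+1" "i+1 \<le> n" using i by auto
    have mi: "mono (theta tau i)" using mono i by simp
    have "x \<le> theta tau i (t i)" unfolding x_def
      using sprops[of i] i by (intro monoD[OF mi]) simp
    also have "\<dots> \<le> t (i+1)" using tprec[OF i] .
    finally have xt: "x \<le> t (i+1)" .
    obtain k0 where k0: "e (i+1) = of_int k0 * eps" using grid i1 by blast
    obtain m where m: "t (i+1) = of_int m * eps"
      using Tset_grid[OF k0 tT[OF i1]] by blast
    have rt: "r \<le> t (i+1)" unfolding r_def m using round_up_le[OF eps, of x m] xt m by simp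
    have xr: "x \<le> r" unfolding r_def by (rule le_round_up[OF eps])
    have tb: "e (i+1) \<le> t (i+1) \<and> t (i+1) \<le> l (i+1)" using Tset_bounds[OF tT[OF i1] eps] .
    have "\<exists>w. (i+1, w) \<in> V \<and> r \<le> w \<and> w \<le> t (i+1)"
    proof (cases "r \<le> e (i+1)")
      case True then show ?thesis using eV[OF i1] tb by auto
    next
      case False
      show ?thesis
      proof (cases "r < l (i+1)")
        case True
        have "(i, s i) \<in> V" using sprops[of i] i by simp
        then have "(i+1, r) \<in> V" using p2[unfolded P2_def, rule_format, of i "s i"] False True i
          unfolding r_def x_def by simp
        then show ?thesis using rt by auto
      next
        case False
        then show ?thesis using lV[OF i1] tb rt by auto
      qed
    qed
    then obtain w where "(i+1, w) \<in> V" "r \<le> w" "w \<le> t (i+1)" by blast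
    then have "w \<le> s (i+1)" using sprops[OF i1] by simp
    then show ?thesis using xr \<open>r \<le> w\<close> unfolding x_def by linarith
  qed
  have qle: "q i (s i) \<le> rho i (t i)" if i: "1 \<le> i" "i \<le> n" for i
  proof -
    have tb: "e i \<le> t i \<and> t i \<le> l i" using Tset_bounds[OF tT[OF i] eps] .
    have sp: "(i, s i) \<in> V" "s i \<le> t i" "\<forall>u. (i,u) \<in> V \<and> u \<le> t i \<longrightarrow> u \<le> s i"
      using sprops[OF i] by auto
    show ?thesis
    proof (cases "s i = l i")
      case True
      then have "t i = l i" using sp tb by auto
      have "q i (l i) = rho i (l i)" using conjunct2[OF p3[unfolded P3_def], rule_format, of i] sp(1) True by simp
      then show ?thesis using True \<open>t i = l i\<close> by simp
    next
      case False
      then have sl: "s i < l i" using sp tb by auto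
      define N where "N = {t'. (i, t') \<in> V \<and> s i < t'}"
      have finN: "finite N" unfolding N_def by (rule finVi)
      have "l i \<in> N" unfolding N_def using lV[OF i] sl by auto
      then have "Min N \<in> N" using Min_in[OF finN] by blast
      then have mN: "(i, Min N) \<in> V" "s i < Min N" unfolding N_def by auto
      have "t i < next_time V i (s i)"
      proof (rule ccontr)
        assume "\<not> t i < next_time V i (s i)"
        then have "Min N \<le> t i" unfolding next_time_def N_def by simp
        then have "Min N \<le> s i" using sp(3) mN(1) by simp
        then show False using mN(2) by simp
      qed
      define S where "S = {u \<in> Tset eps (e i) (l i). s i \<le> u \<and> u < next_time V i (s i)}"
      have tS: "t i \<in> S" unfolding S_def using tT[OF i] sp(2) \<open>t i < next_time V i (s i)\<close> by auto
      have finS: "finite S" unfolding S_def using finite_Tset[OF eps] by auto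
      have "q i (s i) = Min (rho i ` S)" using conjunct1[OF p3[unfolded P3_def], rule_format, of i "s i"] sp(1) sl unfolding S_def by simp
      also have "\<dots> \<le> rho i (t i)" using finS tS by (intro Min_le) auto
      finally show ?thesis .
    qed
  qed
  have "restr_feasible n tau V q Q s"
    unfolding restr_feasible_def
  proof (intro conjI allI impI)
    fix i assume "1 \<le> i \<and> i \<le> n" then show "(i, s i) \<in> V" using sprops[of i] by simp
  next
    fix i assume "1 \<le> i \<and> i < n" then show "theta tau i (s i) \<le> s (i+1)" using sprec[of i] by simp
  next
    have "(\<Sum>i=1..n. q i (s i)) \<le> (\<Sum>i=1..n. rho i (t i))" by (rule sum_mono, rule qle) auto
    then show "(\<Sum>i=1..n. q i (s i)) \<le> Q" using tsum by linarith
  qed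
  moreover have "theta tau n (s n) \<le> theta tau n (t n)"
  proof -
    have "mono (theta tau n)" using mono n1 by simp
    moreover have "s n \<le> t n" using sprops[OF n1 order.refl] by simp
    ultimately show ?thesis by (rule monoD)
  qed
  ultimately show ?thesis by blast
qed

theorem lemma3:
  fixes n :: nat and eps :: real and e l :: "nat \<Rightarrow> real"
    and tau rho :: "nat \<Rightarrow> real \<Rightarrow> real" and Q :: real
    and V :: "(nat \<times> real) set" and q :: "nat \<Rightarrow> real \<Rightarrow> real"
  assumes "1 \<le> n"
    and "eps > 0"
    and "\<forall>i. 1 \<le> i \<and> i \<le> n \<longrightarrow> (\<exists>k::int. e i = of_int k * eps) \<and> (\<exists>k::int. l i = of_int k * eps)"
    and "\<forall>i. 1 \<le> i \<and> i \<le> n \<longrightarrow> mono (theta tau i)"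
    and "V \<subseteq> nodes n eps e l"
    and "P1 n e l V"
    and "P2 n eps e l tau V"
    and "P3 eps e l rho V q"
    and "\<exists>t. disc_feasible n eps e l tau rho Q t"
  shows "(\<exists>t. restr_feasible n tau V q Q t)
       \<and> restr_opt n tau V q Q \<le> disc_opt n eps e l tau rho Q"
proof -
  note M = main[OF assms(1-8)]
  define D where "D = {theta tau n (t n) | t. disc_feasible n eps e l tau rho Q t}"
  define R where "R = {theta tau n (t n) | t. restr_feasible n tau V q Q t}"
  have finD: "finite D"
  proof (rule finite_subset)
    show "D \<subseteq> theta tau n ` Tset eps (e n) (l n)"
      unfolding D_def using assms(1) by (auto simp: disc_feasible_def)
    show "finite (theta tau n ` Tset eps (e n) (l n))" using finite_Tset[OF assms(2)] by simp
  qed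
  have finR: "finite R"
  proof (rule finite_subset)
    show "R \<subseteq> theta tau n ` Tset eps (e n) (l n)"
      unfolding R_def using assms(1) assms(5) by (auto simp: restr_feasible_def nodes_def)
    show "finite (theta tau n ` Tset eps (e n) (l n))" using finite_Tset[OF assms(2)] by simp
  qed
  have "D \<noteq> {}" unfolding D_def using assms(9) by auto
  then have "Min D \<in> D" using finD by simp
  then obtain t where tf: "disc_feasible n eps e l tau rho Q t" and md: "Min D = theta tau n (t n)"
    unfolding D_def by auto
  obtain s where sf: "restr_feasible n tau V q Q s" and sl: "theta tau n (s n) \<le> theta tau n (t n)"
    using M[OF tf] by blast
  have "theta tau n (s n) \<in> R" unfolding R_def using sf by auto
  then have "Min R \<le> theta tau n (s n)" using finR by simp
  then have "restr_opt n tau V q Q \<le> disc_opt n eps e l tau rho Q"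
    unfolding restr_opt_def disc_opt_def R_def[symmetric] D_def[symmetric] using sl md by linarith
  then show ?thesis using sf by blast
qed

end
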